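(* Let $d\ge2$, $\tau>0$ and $\varepsilon\in(0,1]$. For any $t\in(0,\tau]$ and $x,x'\in\mathbb{R}$ with $|x-x'|\le h^{-1}(1/t)/4$ and $|x-x'|\le\varepsilon/4$, $$\tilde g^{(\varepsilon)}_t(x')\le\tilde g^{(\varepsilon)}_t(x/2).$$
   Context: Let $\nu$ be a symmetric density of an infinite Lévy measure on $\mathbb{R}$ (with $\int(x^2\wedge1)\nu<\infty$), such that for some $\eta_4>0$, $\nu\in C^1(0,\eta_4)$, $\nu'<0$ and $-\nu'(x)/x$ decreasing on $(0,\eta_4)$. Let $\psi(\xi)=\int(1-\cos(\xi x))\nu(x)dx$ satisfy $\psi(\lambda\theta)\ge\underline{C}\lambda^\alpha\psi(\theta)$ for $\lambda\ge1,\theta\ge0$ and $\psi(\lambda\theta)\le\overline{C}\lambda^\beta\psi(\theta)$ for $\lambda\ge1,\theta\ge1$, with $0<\alpha\le\beta<2$. $h(r)=\int(1\wedge x^2r^{-2})\nu(x)dx$ for $r>0$ (continuous, strictly decreasing from $\infty$ to $0$), $h^{-1}$ its inverse. $\tilde g^{(\varepsilon)}_t(x)=\frac{1}{h^{-1}(1/t)}\wedge\frac{t h(|x|)}{|x|}$ if $|x|<\varepsilon$ (with $h(0)/0=\infty$), and $\tilde g^{(\varepsilon)}_t(x)=c_\varepsilon t^{(d+\beta-1)/\alpha}e^{-|x|}$ if $|x|\ge\varepsilon$, where $c_\varepsilon=\Big(\frac{1}{h^{-1}(1/\tau)}\wedge\frac{\tau h(\varepsilon)}{\varepsilon}\Big)\frac{e^{\varepsilon}}{\tau^{(d+\beta-1)/\alpha}}$.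 *)

theory Defs
  imports "HOL-Analysis.Analysis"
begin

definition psi_fn :: "(real \<Rightarrow> real) \<Rightarrow> real \<Rightarrow> real" where
  "psi_fn \<nu> \<xi> = enn2real (\<integral>\<^sup>+ x. ennreal ((1 - cos (\<xi> * x)) * \<nu> x) \<partial>lborel)"

definition h_fn :: "(real \<Rightarrow> real) \<Rightarrow> real \<Rightarrow> real" where
  "h_fn \<nu> r = enn2real (\<integral>\<^sup>+ x. ennreal (min 1 (x\<^sup>2 / r\<^sup>2) * \<nu> x) \<partial>lborel)"

definition h_inv :: "(real \<Rightarrow> real) \<Rightarrow> real \<Rightarrow> real" where
  "h_inv \<nu> s = (THE r. r > 0 \<and> h_fn \<nu> r = s)"

text \<open>The function tilde g^(eps)_t(x), with h(0)/0 = infinity.\<close>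
definition g_tilde ::
  "(real \<Rightarrow> real) \<Rightarrow> nat \<Rightarrow> real \<Rightarrow> real \<Rightarrow> real \<Rightarrow> real \<Rightarrow> real \<Rightarrow> real \<Rightarrow> real" where
  "g_tilde \<nu> d \<alpha> \<beta> \<tau> \<epsilon> t x =
     (if \<bar>x\<bar> < \<epsilon> then
        (if x = 0 then 1 / h_inv \<nu> (1 / t)
         else min (1 / h_inv \<nu> (1 / t)) (t * h_fn \<nu> \<bar>x\<bar> / \<bar>x\<bar>))
      else
        (min (1 / h_inv \<nu> (1 / \<tau>)) (\<tau> * h_fn \<nu> \<epsilon> / \<epsilon>) * exp \<epsilon>
           / \<tau> powr ((real d + \<beta> - 1) / \<alpha>))
        * t powr ((real d + \<beta> - 1) / \<alpha>) * exp (- \<bar>x\<bar>))"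

end

theory Submission
  imports Defs
begin

context
  fixes \<nu> :: "real \<Rightarrow> real"
  assumes nu_meas: "\<nu> \<in> borel_measurable borel"
    and nu_nonneg: "\<And>y. \<nu> y \<ge> 0"
    and nu_levy: "(\<integral>\<^sup>+ y. ennreal (min (y\<^sup>2) 1 * \<nu> y) \<partial>lborel) < \<infinity>"
    and nu_infinite: "(\<integral>\<^sup>+ y. ennreal (\<nu> y) \<partial>lborel) = \<infinity>"
begin

lemma nu_meas_l[measurable]: "\<nu> \<in> borel_measurable lborel"
  using nu_meas by simp

lemma w_int: "integrable lborel (\<lambda>y. min (y\<^sup>2) 1 * \<nu> y)"
  by (rule integrableI_nonneg) (use nu_levy nu_nonneg in auto)

lemma f_bound: "(r::real) > 0 \<Longrightarrow> min 1 (y\<^sup>2 / r\<^sup>2) \<le> max 1 (1 / r\<^sup>2) * min (y\<^sup>2) 1"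
proof -
  assume r: "r > 0"
  show ?thesis
  proof (cases "y\<^sup>2 \<le> 1")
    case True
    have "y\<^sup>2 / r\<^sup>2 = (1/r\<^sup>2) * y\<^sup>2" by (simp add: divide_inverse)
    also have "\<dots> \<le> max 1 (1 / r\<^sup>2) * y\<^sup>2" by (intro mult_right_mono) auto
    finally show ?thesis using True by (simp add: min_def)
  next
    case False
    have m: "min 1 (y\<^sup>2 / r\<^sup>2) \<le> 1" by simp
    have "min (y\<^sup>2) 1 = 1" using False by simp
    then show ?thesis using m by (metis max.cobounded1 order_trans mult_1_right)
  qed
qed

lemma f_int: "(r::real) > 0 \<Longrightarrow> integrable lborel (\<lambda>y. min 1 (y\<^sup>2 / r\<^sup>2) * \<nu> y)"
proof -
  assume r: "r > 0"
  have "integrable lborel (\<lambda>y. max 1 (1 / r\<^sup>2) * (min (y\<^sup>2) 1 * \<nu> y))"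
    using w_int by simp
  moreover have "(\<lambda>y. min 1 (y\<^sup>2 / r\<^sup>2) * \<nu> y) \<in> borel_measurable lborel" by measurable
  moreover have "AE x in lborel. norm (min 1 (x\<^sup>2 / r\<^sup>2) * \<nu> x) \<le> norm (max 1 (1 / r\<^sup>2) * (min (x\<^sup>2) 1 * \<nu> x))"
  proof (intro AE_I2)
    fix x
    have "min 1 (x\<^sup>2 / r\<^sup>2) * \<nu> x \<le> (max 1 (1 / r\<^sup>2) * min (x\<^sup>2) 1) * \<nu> x"
      using f_bound[OF r, of x] nu_nonneg[of x] by (intro mult_right_mono) auto
    then show "norm (min 1 (x\<^sup>2 / r\<^sup>2) * \<nu> x) \<le> norm (max 1 (1 / r\<^sup>2) * (min (x\<^sup>2) 1 * \<nu> x))"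
      using nu_nonneg[of x] by (simp add: mult.assoc)
  qed
  ultimately show ?thesis by (rule Bochner_Integration.integrable_bound)
qed

lemma h_eq: "(r::real) > 0 \<Longrightarrow> h_fn \<nu> r = integral\<^sup>L lborel (\<lambda>y. min 1 (y\<^sup>2 / r\<^sup>2) * \<nu> y)"
  unfolding h_fn_def
  by (rule enn2real_nn_integral_eq_integral) (use nu_nonneg in auto)

lemma h_nonneg: "h_fn \<nu> (r::real) \<ge> 0"
  unfolding h_fn_def by simp

lemma h_mono: "0 < (r::real) \<Longrightarrow> r \<le> s \<Longrightarrow> h_fn \<nu> s \<le> h_fn \<nu> r"
proof -
  assume r: "0 < r" and rs: "r \<le> s"
  have s: "s > 0" using r rs by simp
  show ?thesis unfolding h_eq[OF r] h_eq[OF s]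
  proof (rule integral_mono[OF f_int[OF s] f_int[OF r]])
    fix y
    have "y\<^sup>2 / s\<^sup>2 \<le> y\<^sup>2 / r\<^sup>2"
      using r rs by (intro divide_left_mono) (auto intro: power_mono)
    then show "min 1 (y\<^sup>2 / s\<^sup>2) * \<nu> y \<le> min 1 (y\<^sup>2 / r\<^sup>2) * \<nu> y"
      using nu_nonneg[of y] by (intro mult_right_mono) auto
  qed
qed

lemma h_sq_mono: "0 < (r::real) \<Longrightarrow> r \<le> s \<Longrightarrow> r\<^sup>2 * h_fn \<nu> r \<le> s\<^sup>2 * h_fn \<nu> s"
proof -
  assume r: "0 < r" and rs: "r \<le> s"
  have s: "s > 0" using r rs by simp
  have eq: "\<And>r y. (r::real) > 0 \<Longrightarrow> r\<^sup>2 * (min 1 (y\<^sup>2 / r\<^sup>2) * \<nu> y) = min (r\<^sup>2) (y\<^sup>2) * \<nu> y"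
    by (auto simp: min_def field_simps)
  show ?thesis unfolding h_eq[OF r] h_eq[OF s] integral_mult_right_zero[symmetric]
  proof (rule integral_mono)
    show "integrable lborel (\<lambda>x. r\<^sup>2 * (min 1 (x\<^sup>2 / r\<^sup>2) * \<nu> x))" using f_int[OF r] by simp
    show "integrable lborel (\<lambda>x. s\<^sup>2 * (min 1 (x\<^sup>2 / s\<^sup>2) * \<nu> x))" using f_int[OF s] by simp
    fix y
    have "r\<^sup>2 \<le> s\<^sup>2" using r rs by (auto intro: power_mono)
    then have "min (r\<^sup>2) (y\<^sup>2) \<le> min (s\<^sup>2) (y\<^sup>2)" by (simp add: min_def)
    then show "r\<^sup>2 * (min 1 (y\<^sup>2 / r\<^sup>2) * \<nu> y) \<le> s\<^sup>2 * (min 1 (y\<^sup>2 / s\<^sup>2) * \<nu> y)"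
      unfolding eq[OF r] eq[OF s] using nu_nonneg[of y] by (intro mult_right_mono) auto
  qed
qed


lemma h_lip: "0 < (a::real) \<Longrightarrow> a \<le> r \<Longrightarrow> r \<le> s \<Longrightarrow> s \<le> b \<Longrightarrow>
   h_fn \<nu> r - h_fn \<nu> s \<le> (h_fn \<nu> a * 2 * b / a\<^sup>2) * (s - r)"
proof -
  assume a: "0 < a" and ar: "a \<le> r" and rs: "r \<le> s" and sb: "s \<le> b"
  have r: "r > 0" using a ar by simp
  have hs: "r\<^sup>2 * h_fn \<nu> r \<le> s\<^sup>2 * h_fn \<nu> s" using h_sq_mono[OF r rs] .
  have "r\<^sup>2 * (h_fn \<nu> r - h_fn \<nu> s) \<le> (s\<^sup>2 - r\<^sup>2) * h_fn \<nu> s"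
    using hs by (simp add: algebra_simps)
  also have "\<dots> \<le> (s\<^sup>2 - r\<^sup>2) * h_fn \<nu> a"
    using h_mono[OF a, of s] ar rs r by (intro mult_left_mono) (auto intro: power_mono)
  also have "\<dots> = (s + r) * (s - r) * h_fn \<nu> a" by (simp add: power2_eq_square algebra_simps)
  also have "\<dots> \<le> (2 * b) * (s - r) * h_fn \<nu> a"
    using rs sb h_nonneg[of a] by (intro mult_right_mono) auto
  finally have 1: "r\<^sup>2 * (h_fn \<nu> r - h_fn \<nu> s) \<le> (2 * b) * (s - r) * h_fn \<nu> a" .
  have d: "0 \<le> h_fn \<nu> r - h_fn \<nu> s" using h_mono[OF r rs] by simp
  have "a\<^sup>2 * (h_fn \<nu> r - h_fn \<nu> s) \<le> r\<^sup>2 * (h_fn \<nu> r - h_fn \<nu> s)"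
    using d a ar by (intro mult_right_mono) (auto intro: power_mono)
  with 1 have "a\<^sup>2 * (h_fn \<nu> r - h_fn \<nu> s) \<le> (2 * b) * (s - r) * h_fn \<nu> a" by linarith
  then show ?thesis using a by (simp add: field_simps)
qed

lemma h_cont: "0 < (a::real) \<Longrightarrow> continuous_on {a..b} (h_fn \<nu>)"
proof -
  assume a: "0 < a"
  define K where "K = h_fn \<nu> a * 2 * b / a\<^sup>2"
  have "lipschitz_on (max K 0) {a..b} (h_fn \<nu>)"
    unfolding lipschitz_on_def
  proof (intro conjI ballI)
    fix x y assume x: "x \<in> {a..b}" and y: "y \<in> {a..b}"
    have *: "\<bar>h_fn \<nu> r - h_fn \<nu> s\<bar> \<le> max K 0 * \<bar>s - r\<bar>" if "a \<le> r" "r \<le> s" "s \<le> b" for r s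
    proof -
      have "h_fn \<nu> r - h_fn \<nu> s \<le> K * (s - r)" using h_lip[OF a that] by (simp add: K_def)
      also have "\<dots> \<le> max K 0 * (s - r)" using that by (intro mult_right_mono) auto
      finally show ?thesis using h_mono[of r s] a that by auto
    qed
    show "dist (h_fn \<nu> x) (h_fn \<nu> y) \<le> max K 0 * dist x y"
    proof (cases "x \<le> y")
      case True then show ?thesis using *[of x y] x y by (simp add: dist_real_def)
    next
      case False then show ?thesis using *[of y x] x y by (simp add: dist_real_def abs_minus_commute)
    qed
  qed simp
  then show ?thesis by (rule lipschitz_on_continuous_on)
qed

lemma h_strict: "0 < (r::real) \<Longrightarrow> r < s \<Longrightarrow> h_fn \<nu> s < h_fn \<nu> r"
proof (rule ccontr)
  assume r: "0 < r" and rs: "r < s" and "\<not> h_fn \<nu> s < h_fn \<nu> r"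
  then have eqh: "h_fn \<nu> r = h_fn \<nu> s" using h_mono[of r s] by simp
  have s: "s > 0" using r rs by simp
  define D where "D = (\<lambda>y. min 1 (y\<^sup>2 / r\<^sup>2) * \<nu> y - min 1 (y\<^sup>2 / s\<^sup>2) * \<nu> y)"
  have Dint: "integrable lborel D" unfolding D_def using f_int[OF r] f_int[OF s] by simp
  have Dnn: "0 \<le> D y" for y
  proof -
    have "y\<^sup>2 / s\<^sup>2 \<le> y\<^sup>2 / r\<^sup>2"
      using r rs by (intro divide_left_mono) (auto intro: power_mono)
    then show ?thesis unfolding D_def using nu_nonneg[of y]
      by (simp add: left_diff_distrib[symmetric] mult_nonneg_nonneg)
  qed
  have "integral\<^sup>L lborel D = 0"
    unfolding D_def using eqh f_int[OF r] f_int[OF s] h_eq[OF r] h_eq[OF s] by simp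
  then have "AE y in lborel. D y = 0" using integral_nonneg_eq_0_iff_AE[OF Dint] Dnn by simp
  moreover have "AE y in lborel. y \<noteq> 0" by (rule AE_lborel_singleton)
  ultimately have AEz: "AE y in lborel. \<bar>y\<bar> < s \<longrightarrow> \<nu> y = 0"
  proof eventually_elim
    case (elim y)
    show ?case
    proof
      assume ys: "\<bar>y\<bar> < s"
      have y2: "0 < y\<^sup>2" using elim by simp
      have "y\<^sup>2 < s\<^sup>2" using ys s by (metis abs_ge_zero power2_abs power_strict_mono zero_less_numeral) 
      then have l1: "y\<^sup>2 / s\<^sup>2 < 1" using s by simp
      have l2: "y\<^sup>2 / s\<^sup>2 < y\<^sup>2 / r\<^sup>2"
        using r rs y2 by (intro divide_strict_left_mono) (auto intro: power_strict_mono)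
      have "min 1 (y\<^sup>2 / s\<^sup>2) < min 1 (y\<^sup>2 / r\<^sup>2)" using l1 l2 by (simp add: min_def)
      then have p: "min 1 (y\<^sup>2 / r\<^sup>2) - min 1 (y\<^sup>2 / s\<^sup>2) \<noteq> 0" by linarith
      have "(min 1 (y\<^sup>2 / r\<^sup>2) - min 1 (y\<^sup>2 / s\<^sup>2)) * \<nu> y = 0"
        using elim unfolding D_def by (simp only: left_diff_distrib)
      then show "\<nu> y = 0" using p by simp
    qed
  qed
  have "(\<integral>\<^sup>+ y. ennreal (\<nu> y) \<partial>lborel) \<le> (\<integral>\<^sup>+ y. ennreal (max 1 (1 / s\<^sup>2) * (min (y\<^sup>2) 1 * \<nu> y)) \<partial>lborel)"
  proof (rule nn_integral_mono_AE)
    show "AE y in lborel. ennreal (\<nu> y) \<le> ennreal (max 1 (1 / s\<^sup>2) * (min (y\<^sup>2) 1 * \<nu> y))"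
      using AEz
    proof eventually_elim
      case (elim y)
      show ?case
      proof (cases "\<bar>y\<bar> < s")
        case True then show ?thesis using elim by simp
      next
        case False
        then have "s\<^sup>2 \<le> y\<^sup>2" using s by (metis abs_ge_zero less_le_not_le linorder_le_less_linear power2_abs power_mono)
        then have "1 \<le> min 1 (y\<^sup>2 / s\<^sup>2)" using s by simp
        also have "\<dots> \<le> max 1 (1 / s\<^sup>2) * min (y\<^sup>2) 1" by (rule f_bound[OF s])
        finally have "1 * \<nu> y \<le> (max 1 (1 / s\<^sup>2) * min (y\<^sup>2) 1) * \<nu> y"
          using nu_nonneg[of y] by (intro mult_right_mono) auto
        then show ?thesis by (simp add: mult.assoc ennreal_leI)
      qed
    qed
  qed
  also have "\<dots> = ennreal (max 1 (1 / s\<^sup>2)) * (\<integral>\<^sup>+ y. ennreal (min (y\<^sup>2) 1 * \<nu> y) \<partial>lborel)"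
    using nu_nonneg by (subst nn_integral_cmult[symmetric]) (auto simp: ennreal_mult)
  also have "\<dots> < \<infinity>" using nu_levy by (simp add: ennreal_mult_less_top)
  finally show False using nu_infinite by simp
qed


lemma h_small: "0 < (e::real) \<Longrightarrow> \<exists>r>0. h_fn \<nu> r < e"
proof -
  assume e: "0 < e"
  define S where "S = (\<lambda>i y. min 1 (y\<^sup>2 / (real (Suc i))\<^sup>2) * \<nu> y)"
  have lim: "(\<lambda>i. integral\<^sup>L lborel (S i)) \<longlonglongrightarrow> integral\<^sup>L lborel (\<lambda>y::real. 0::real)"
  proof (rule integral_dominated_convergence[where w="\<lambda>y. min (y\<^sup>2) 1 * \<nu> y" and s=S ])
    show "(\<lambda>y. 0::real) \<in> borel_measurable lborel" by simp
    show "\<And>i. S i \<in> borel_measurable lborel" unfolding S_def by measurable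
    show "integrable lborel (\<lambda>y. min (y\<^sup>2) 1 * \<nu> y)" by (rule w_int)
    show "AE y in lborel. (\<lambda>i. S i y) \<longlonglongrightarrow> 0"
    proof (intro AE_I2)
      fix y :: real
      have "(\<lambda>i. y\<^sup>2 * (inverse (real (Suc i)))\<^sup>2) \<longlonglongrightarrow> y\<^sup>2 * 0\<^sup>2"
        by (intro tendsto_intros LIMSEQ_inverse_real_of_nat)
      then have l0: "(\<lambda>i. y\<^sup>2 / (real (Suc i))\<^sup>2) \<longlonglongrightarrow> 0"
        by (simp add: power_inverse divide_inverse)
      have l1: "(\<lambda>i. min 1 (y\<^sup>2 / (real (Suc i))\<^sup>2)) \<longlonglongrightarrow> min 1 0"
        by (intro tendsto_intros l0)
      have "(\<lambda>i. min 1 (y\<^sup>2 / (real (Suc i))\<^sup>2) * \<nu> y) \<longlonglongrightarrow> min 1 0 * \<nu> y"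
        by (intro tendsto_intros l1)
      then show "(\<lambda>i. S i y) \<longlonglongrightarrow> 0" unfolding S_def by simp
    qed
    show "AE y in lborel. norm (S i y) \<le> min (y\<^sup>2) 1 * \<nu> y" for i
    proof (intro AE_I2)
      fix y :: real
      have "y\<^sup>2 / (real (Suc i))\<^sup>2 \<le> y\<^sup>2 / 1"
        by (intro divide_left_mono) auto
      then have "min 1 (y\<^sup>2 / (real (Suc i))\<^sup>2) \<le> min (y\<^sup>2) 1" by (simp add: min_le_iff_disj)
      then have "min 1 (y\<^sup>2 / (real (Suc i))\<^sup>2) * \<nu> y \<le> min (y\<^sup>2) 1 * \<nu> y"
        using nu_nonneg[of y] by (intro mult_right_mono) auto
      then show "norm (S i y) \<le> min (y\<^sup>2) 1 * \<nu> y" unfolding S_def using nu_nonneg[of y] by simp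
    qed
  qed
  have "\<forall>\<^sub>F i in sequentially. integral\<^sup>L lborel (S i) < e"
    using lim e by (simp add: order_tendstoD(2))
  then obtain i where "integral\<^sup>L lborel (S i) < e" by (meson eventually_sequentially order_refl)
  moreover have "h_fn \<nu> (real (Suc i)) = integral\<^sup>L lborel (S i)"
    unfolding S_def by (rule h_eq) simp
  ultimately show ?thesis by (intro exI[of _ "real (Suc i)"]) auto
qed

lemma h_big: "\<exists>r>0. h_fn \<nu> r > (M::real)"
proof (rule ccontr)
  assume "\<not> (\<exists>r>0. h_fn \<nu> r > M)"
  then have bnd: "\<And>r. r > 0 \<Longrightarrow> h_fn \<nu> r \<le> M" by auto
  define F where "F = (\<lambda>i y. ennreal (min 1 (y\<^sup>2 / (1 / real (Suc i))\<^sup>2) * \<nu> y))"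
  have inc: "incseq F"
  proof (intro incseq_SucI le_funI)
    fix i y
    have "y\<^sup>2 / (1 / real (Suc i))\<^sup>2 \<le> y\<^sup>2 / (1 / real (Suc (Suc i)))\<^sup>2"
      by (simp add: power_divide divide_simps mult_left_mono power_mono)
    then have "min 1 (y\<^sup>2 / (1 / real (Suc i))\<^sup>2) * \<nu> y \<le> min 1 (y\<^sup>2 / (1 / real (Suc (Suc i)))\<^sup>2) * \<nu> y"
      using nu_nonneg[of y] by (intro mult_right_mono) auto
    then show "F i y \<le> F (Suc i) y" unfolding F_def by (simp add: ennreal_leI)
  qed
  have meas: "\<And>i. F i \<in> borel_measurable lborel" unfolding F_def by measurable
  have Fint: "integral\<^sup>N lborel (F i) = ennreal (h_fn \<nu> (1 / real (Suc i)))" for i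
  proof -
    have p: "(1 / real (Suc i)) > 0" by simp
    show ?thesis unfolding F_def h_eq[OF p]
      by (rule nn_integral_eq_integral[OF f_int[OF p]]) (use nu_nonneg in auto)
  qed
  have sup: "(SUP i. F i y) = ennreal (\<nu> y)" if y: "y \<noteq> 0" for y
  proof (rule antisym)
    show "(SUP i. F i y) \<le> ennreal (\<nu> y)"
    proof (rule SUP_least)
      fix i
      have "min 1 (y\<^sup>2 / (1 / real (Suc i))\<^sup>2) * \<nu> y \<le> 1 * \<nu> y"
        using nu_nonneg[of y] by (intro mult_right_mono) auto
      then show "F i y \<le> ennreal (\<nu> y)" unfolding F_def by (simp add: ennreal_leI)
    qed
  next
    define N where "N = nat \<lceil>1 / \<bar>y\<bar>\<rceil>"
    have "1 / \<bar>y\<bar> \<le> real (Suc N)" unfolding N_def by linarith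
    then have "1 \<le> \<bar>y\<bar> * real (Suc N)" using y by (simp add: field_simps)
    then have "1 \<le> (\<bar>y\<bar> * real (Suc N))\<^sup>2" by (simp add: one_le_power)
    then have "1 \<le> y\<^sup>2 / (1 / real (Suc N))\<^sup>2" by (simp add: power_mult_distrib power_divide)
    then have "F N y = ennreal (\<nu> y)" unfolding F_def by (simp add: min_def)
    then show "ennreal (\<nu> y) \<le> (SUP i. F i y)" by (metis SUP_upper UNIV_I)
  qed
  have "(\<integral>\<^sup>+ y. ennreal (\<nu> y) \<partial>lborel) = (\<integral>\<^sup>+ y. (SUP i. F i y) \<partial>lborel)"
    by (rule nn_integral_cong_AE) (use AE_lborel_singleton[of 0] sup in \<open>auto elim: AE_mp\<close>)
  also have "\<dots> = (SUP i. integral\<^sup>N lborel (F i))"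
    by (rule nn_integral_monotone_convergence_SUP[OF inc meas])
  also have "\<dots> \<le> ennreal M"
    unfolding Fint by (rule SUP_least) (simp add: ennreal_leI bnd)
  also have "\<dots> < \<infinity>" by simp
  finally show False using nu_infinite by simp
qed


lemma h_exists: "0 < (s::real) \<Longrightarrow> \<exists>r>0. h_fn \<nu> r = s"
proof -
  assume s: "0 < s"
  obtain a where a: "a > 0" "h_fn \<nu> a > s" using h_big by blast
  obtain b where b: "b > 0" "h_fn \<nu> b < s" using h_small[OF s] by blast
  have ab: "a \<le> b"
  proof (rule ccontr)
    assume "\<not> a \<le> b"
    then have "h_fn \<nu> a \<le> h_fn \<nu> b" using h_mono[OF b(1)] by simp
    then show False using a b by simp
  qed
  have "\<exists>x. a \<le> x \<and> x \<le> b \<and> h_fn \<nu> x = s"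
    by (rule IVT2') (use a b ab h_cont[OF a(1)] in auto)
  then obtain x where "a \<le> x" "h_fn \<nu> x = s" by blast
  then show ?thesis using a by (intro exI[of _ x]) auto
qed

lemma h_inv_prop: "0 < (s::real) \<Longrightarrow> h_inv \<nu> s > 0 \<and> h_fn \<nu> (h_inv \<nu> s) = s"
proof -
  assume s: "0 < s"
  have "\<exists>!r. r > 0 \<and> h_fn \<nu> r = s"
  proof (rule ex_ex1I)
    show "\<exists>r. r > 0 \<and> h_fn \<nu> r = s" using h_exists[OF s] by blast
  next
    fix r1 r2 assume r1: "r1 > 0 \<and> h_fn \<nu> r1 = s" and r2: "r2 > 0 \<and> h_fn \<nu> r2 = s"
    show "r1 = r2"
    proof (rule ccontr)
      assume "r1 \<noteq> r2"
      then consider "r1 < r2" | "r2 < r1" by linarith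
      then show False
      proof cases
        case 1 then show False using h_strict[of r1 r2] r1 r2 by simp
      next
        case 2 then show False using h_strict[of r2 r1] r1 r2 by simp
      qed
    qed
  qed
  then show ?thesis unfolding h_inv_def by (rule theI')
qed

lemma h_inv_anti: "0 < (s1::real) \<Longrightarrow> s1 \<le> s2 \<Longrightarrow> h_inv \<nu> s2 \<le> h_inv \<nu> s1"
proof (rule ccontr)
  assume s1: "0 < s1" and le: "s1 \<le> s2" and "\<not> h_inv \<nu> s2 \<le> h_inv \<nu> s1"
  then have lt: "h_inv \<nu> s1 < h_inv \<nu> s2" by simp
  have s2: "0 < s2" using s1 le by simp
  have "h_fn \<nu> (h_inv \<nu> s2) < h_fn \<nu> (h_inv \<nu> s1)"
    using h_strict[OF _ lt] h_inv_prop[OF s1] by simp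
  then show False using h_inv_prop[OF s1] h_inv_prop[OF s2] le by simp
qed

end

theorem lemma2p9:
  fixes \<nu> \<nu>' :: "real \<Rightarrow> real"
    and \<eta>4 \<alpha> \<beta> C_low C_up \<tau> \<epsilon> t x x' :: real
    and d :: nat
  assumes nu_meas: "\<nu> \<in> borel_measurable borel"
    and nu_nonneg: "\<And>y. \<nu> y \<ge> 0"
    and nu_sym: "\<And>y. \<nu> (- y) = \<nu> y"
    and nu_levy: "(\<integral>\<^sup>+ y. ennreal (min (y\<^sup>2) 1 * \<nu> y) \<partial>lborel) < \<infinity>"
    and nu_infinite: "(\<integral>\<^sup>+ y. ennreal (\<nu> y) \<partial>lborel) = \<infinity>"
    and eta4_pos: "\<eta>4 > 0"
    and nu_deriv: "\<And>y. 0 < y \<Longrightarrow> y < \<eta>4 \<Longrightarrow> (\<nu> has_real_derivative \<nu>' y) (at y)"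
    and nu_C1: "continuous_on {0<..<\<eta>4} \<nu>'"
    and nu'_neg: "\<And>y. 0 < y \<Longrightarrow> y < \<eta>4 \<Longrightarrow> \<nu>' y < 0"
    and nu'_ratio_decr: "\<And>y z. 0 < y \<Longrightarrow> y \<le> z \<Longrightarrow> z < \<eta>4 \<Longrightarrow>
                          - \<nu>' z / z \<le> - \<nu>' y / y"
    and alpha_pos: "0 < \<alpha>" and alpha_le_beta: "\<alpha> \<le> \<beta>" and beta_lt2: "\<beta> < 2"
    and C_low_pos: "C_low > 0" and C_up_pos: "C_up > 0"
    and lower_scaling: "\<And>lam \<theta>. 1 \<le> lam \<Longrightarrow> 0 \<le> \<theta> \<Longrightarrow>
                          psi_fn \<nu> (lam * \<theta>) \<ge> C_low * lam powr \<alpha> * psi_fn \<nu> \<theta>"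
    and upper_scaling: "\<And>lam \<theta>. 1 \<le> lam \<Longrightarrow> 1 \<le> \<theta> \<Longrightarrow>
                          psi_fn \<nu> (lam * \<theta>) \<le> C_up * lam powr \<beta> * psi_fn \<nu> \<theta>"
    and d_ge: "d \<ge> 2"
    and tau_pos: "\<tau> > 0"
    and eps_pos: "0 < \<epsilon>" and eps_le1: "\<epsilon> \<le> 1"
    and t_pos: "0 < t" and t_le: "t \<le> \<tau>"
    and close_h: "\<bar>x - x'\<bar> \<le> h_inv \<nu> (1 / t) / 4"
    and close_eps: "\<bar>x - x'\<bar> \<le> \<epsilon> / 4"
  shows "g_tilde \<nu> d \<alpha> \<beta> \<tau> \<epsilon> t x' \<le> g_tilde \<nu> d \<alpha> \<beta> \<tau> \<epsilon> t (x / 2)"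
proof -
  define r0 where "r0 = h_inv \<nu> (1 / t)"
  define R where "R = h_inv \<nu> (1 / \<tau>)"
  define p where "p = (real d + \<beta> - 1) / \<alpha>"
  define m where "m = min (1 / R) (\<tau> * h_fn \<nu> \<epsilon> / \<epsilon>)"
  define c where "c = m * exp \<epsilon> / \<tau> powr p"
  define G where "G = (\<lambda>y::real. if y = 0 then 1 / r0 else min (1 / r0) (t * h_fn \<nu> \<bar>y\<bar> / \<bar>y\<bar>))"
  define B where "B = min (1 / r0) (t * h_fn \<nu> \<epsilon> / \<epsilon>)"
  note hI = h_inv_prop[OF nu_meas nu_nonneg nu_levy nu_infinite]
  note hM = h_mono[OF nu_meas nu_nonneg nu_levy nu_infinite]
  note hN = h_nonneg[OF nu_meas nu_nonneg nu_levy nu_infinite]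
  have r0: "r0 > 0" "h_fn \<nu> r0 = 1 / t" using hI[of "1/t"] t_pos unfolding r0_def by auto
  have R: "R > 0" using hI[of "1/\<tau>"] tau_pos unfolding R_def by auto
  have r0R: "r0 \<le> R" unfolding r0_def R_def
    by (rule h_inv_anti[OF nu_meas nu_nonneg nu_levy nu_infinite]) (use tau_pos t_pos t_le in \<open>auto simp: divide_simps\<close>)
  have geq: "g_tilde \<nu> d \<alpha> \<beta> \<tau> \<epsilon> t y = (if \<bar>y\<bar> < \<epsilon> then G y else c * t powr p * exp (- \<bar>y\<bar>))" for y
    unfolding g_tilde_def G_def c_def m_def p_def r0_def R_def by simp
  have A: "G y \<le> 1 / r0" for y unfolding G_def by auto
  have Bc: "G y = 1 / r0" if "\<bar>y\<bar> \<le> r0" for y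
  proof (cases "y = 0")
    case False
    then have ay: "\<bar>y\<bar> > 0" by simp
    have "h_fn \<nu> r0 \<le> h_fn \<nu> \<bar>y\<bar>" using hM[OF ay that] .
    then have "1 \<le> t * h_fn \<nu> \<bar>y\<bar>" using r0 t_pos by (simp add: field_simps)
    then have "1 / \<bar>y\<bar> \<le> t * h_fn \<nu> \<bar>y\<bar> / \<bar>y\<bar>" using ay by (simp add: divide_right_mono)
    moreover have "1 / r0 \<le> 1 / \<bar>y\<bar>" using ay that by (simp add: frac_le)
    ultimately show ?thesis unfolding G_def using False by simp
  qed (simp add: G_def)
  have hq: "t * h_fn \<nu> b / b \<le> t * h_fn \<nu> a / a" if "0 < a" "a \<le> b" for a b
  proof -
    have "h_fn \<nu> b \<le> h_fn \<nu> a" using hM[OF that] .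
    then have tle: "t * h_fn \<nu> b \<le> t * h_fn \<nu> a" using t_pos by simp
    have nn: "0 \<le> t * h_fn \<nu> a" using t_pos hN[of a] by simp
    show ?thesis by (rule frac_le[OF nn tle that])
  qed
  have C: "G y2 \<le> G y1" if "\<bar>y1\<bar> \<le> \<bar>y2\<bar>" for y1 y2
  proof (cases "y1 = 0")
    case True then show ?thesis using A[of y2] by (simp add: G_def)
  next
    case False
    then have "y2 \<noteq> 0" using that by auto
    then show ?thesis using False hq[of "\<bar>y1\<bar>" "\<bar>y2\<bar>"] that unfolding G_def
      by (simp add: min_le_iff_disj)
  qed
  have D: "B \<le> G y" if "\<bar>y\<bar> < \<epsilon>" for y
  proof (cases "y = 0")
    case True then show ?thesis by (simp add: G_def B_def)
  next
    case False
    then show ?thesis using hq[of "\<bar>y\<bar>" \<epsilon>] that unfolding G_def B_def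
      by (simp add: min_le_iff_disj)
  qed
  have p1: "1 \<le> p"
  proof -
    have "\<alpha> \<le> real d + \<beta> - 1" using d_ge alpha_le_beta by simp
    then show ?thesis unfolding p_def using alpha_pos by simp
  qed
  have m0: "0 \<le> m" unfolding m_def using R eps_pos tau_pos hN[of \<epsilon>] by simp
  have c0: "0 \<le> c" unfolding c_def using m0 by simp
  have E: "c * t powr p * exp (- \<bar>y\<bar>) \<le> B" if "\<epsilon> \<le> \<bar>y\<bar>" for y
  proof -
    have "c * t powr p * exp (- \<bar>y\<bar>) \<le> c * t powr p * exp (- \<epsilon>)"
      using that c0 by (intro mult_left_mono) auto
    also have "\<dots> = m * (t / \<tau>) powr p"
      unfolding c_def using t_pos tau_pos by (simp add: powr_divide exp_minus field_simps)
    finally have 1: "c * t powr p * exp (- \<bar>y\<bar>) \<le> m * (t / \<tau>) powr p" .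
    have q1: "(t / \<tau>) powr p \<le> (t / \<tau>) powr 1"
      using p1 t_pos tau_pos t_le by (intro powr_mono') auto
    then have q1': "(t / \<tau>) powr p \<le> t / \<tau>" using t_pos tau_pos by simp
    have tt: "t / \<tau> \<le> 1" using t_le tau_pos by simp
    have q0: "0 \<le> (t / \<tau>) powr p" by simp
    have "m * (t / \<tau>) powr p \<le> 1 / R * 1"
      using q1' tt q0 m0 R by (intro mult_mono) (auto simp: m_def)
    also have "\<dots> \<le> 1 / r0" using r0 r0R by (simp add: frac_le)
    finally have 2: "m * (t / \<tau>) powr p \<le> 1 / r0" .
    have "m * (t / \<tau>) powr p \<le> (\<tau> * h_fn \<nu> \<epsilon> / \<epsilon>) * (t / \<tau>)"
      using q1' q0 m0 hN[of \<epsilon>] eps_pos tau_pos by (intro mult_mono) (auto simp: m_def)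
    also have "\<dots> = t * h_fn \<nu> \<epsilon> / \<epsilon>" using tau_pos by simp
    finally have 3: "m * (t / \<tau>) powr p \<le> t * h_fn \<nu> \<epsilon> / \<epsilon>" .
    show ?thesis using 1 2 3 unfolding B_def by simp
  qed
  show ?thesis
  proof (cases "\<bar>x / 2\<bar> < \<epsilon>")
    case False
    have x'big: "\<bar>x / 2\<bar> \<le> \<bar>x'\<bar>" using False close_eps by linarith
    then have "\<not> \<bar>x'\<bar> < \<epsilon>" using False by linarith
    moreover have "c * t powr p * exp (- \<bar>x'\<bar>) \<le> c * t powr p * exp (- \<bar>x / 2\<bar>)"
      using x'big c0 by (intro mult_left_mono) auto
    ultimately show ?thesis unfolding geq using False by simp
  next
    case True
    show ?thesis
    proof (cases "\<bar>x'\<bar> < \<epsilon>")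
      case False
      then show ?thesis unfolding geq using True E[of x'] D[OF True] by simp
    next
      case x'small: True
      show ?thesis
      proof (cases "\<bar>x / 2\<bar> \<le> \<bar>x'\<bar>")
        case True
        then show ?thesis unfolding geq using x'small \<open>\<bar>x / 2\<bar> < \<epsilon>\<close> C by simp
      next
        case False
        then have "\<bar>x / 2\<bar> \<le> r0" using close_h unfolding r0_def[symmetric] by linarith
        then show ?thesis unfolding geq using x'small \<open>\<bar>x / 2\<bar> < \<epsilon>\<close> Bc A by simp
      qed
    qed
  qed
qed

end
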